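(* Let $p$ be a prime with $p\equiv 1\pmod 3$. Then, for every integer $x$, $$(x^2+x+1)^{p-2}\equiv 1+\frac23x^{p-1}-\frac13x^{p-2}+\sum_{k=2}^{p-2}\left(k\left(\frac k3\right)+[3\mid k-1]-\frac13\right)x^{k-1}\pmod p,$$ equivalently the two sides agree in $\mathbb F_p[x]$ modulo $x^p-x$.
   Context: Here $\left(\frac{k}{3}\right)$ is the Legendre symbol modulo $3$ (equal to $0,1,-1$ according as $k\equiv 0,1,2\pmod 3$). For an assertion $A$, $[A]=1$ if $A$ holds and $[A]=0$ otherwise. The rational numbers $\frac13,\frac23$ are interpreted as elements of $\mathbb Z/p\mathbb Z$ (as $p\neq 3$), i.e., the congruence is in the ring of rationals with denominator prime to $p$. *)

theory Defs
  imports "HOL-Number_Theory.Number_Theory"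
begin

end

theory Submission
  imports Defs
begin


definition B :: "nat \<Rightarrow> int" where
  "B k = (if k mod 3 = 0 then -1 else if k mod 3 = 1 then 3 * int k + 2 else - 3 * int k - 1)"

definition Vs :: "nat \<Rightarrow> int \<Rightarrow> int" where
  "Vs n x = (\<Sum>k = 2..3*n+2. B k * x^(k-1))"

lemma Vs_0: "Vs 0 x = -7 * x" by (simp add: Vs_def B_def)

lemma Vs_Suc: "Vs (Suc n) x = Vs n x - x^(3*n+2) + (9 * int n + 14) * x^(3*n+3) - (9 * int n + 16) * x^(3*n+4)"
proof -
  have e: "3 * Suc n + 2 = Suc (Suc (Suc (3*n+2)))" by simp
  have "Vs (Suc n) x = Vs n x + B (Suc (3*n+2)) * x^(Suc (3*n+2) - 1) + B (Suc (Suc (3*n+2))) * x^(Suc (Suc (3*n+2)) - 1) + B (Suc (Suc (Suc (3*n+2))))*x^(Suc (Suc (Suc (3*n+2))) - 1)"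
    unfolding Vs_def e by (simp only: sum.cl_ivl_Suc) simp
  moreover have "B (Suc (3*n+2)) = -1" "B (Suc (Suc (3*n+2))) = 9*int n+14" "B (Suc (Suc (Suc (3*n+2)))) = -(9*int n+16)"
    by (simp_all add: B_def)
  moreover have "Suc (3*n+2) - 1 = 3*n+2" "Suc (Suc (3*n+2)) - 1 = 3*n+3" "Suc (Suc (Suc (3*n+2))) - 1 = 3*n+4" by simp_all
  ultimately show ?thesis by (simp only:)
qed

lemma Vs_id: "Vs n x * (x^3-1)^2 = -7*x - x^2 + 14*x^3 - 2*x^4 + x^5 - 5*x^6
   + x^(3*n+2) * (1 - (9*(int n+1)+5)*x + (9*(int n+1)+7)*x^2 - x^3 + (9*(int n+1)-4)*x^4 - (9*(int n+1)-2)*x^5)"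
proof (induction n)
  case 0
  have "Vs 0 x * (x^3-1)^2 = -7*x - x^2 + 14*x^3 - 2*x^4 + x^5 - 5*x^6
   + x^2 * (1 - 14*x + 16*x^2 - x^3 + 5*x^4 - 7*x^5)" unfolding Vs_0 by (simp add: algebra_simps power2_eq_square power3_eq_cube eval_nat_numeral)
  then show ?case by (simp add: power2_eq_square)
next
  case (Suc n)
  define z where "z = x^(3*n+2)"
  have p1: "x^(3*n+3) = z*x" "x^(3*n+4) = z*x^2" "x^(3*Suc n+2) = z*x^3"
    by (simp_all add: z_def power_add algebra_simps eval_nat_numeral)
  have IH: "Vs n x * (x^3-1)^2 = -7*x - x^2 + 14*x^3 - 2*x^4 + x^5 - 5*x^6
   + z * (1 - (9*(int n+1)+5)*x + (9*(int n+1)+7)*x^2 - x^3 + (9*(int n+1)-4)*x^4 - (9*(int n+1)-2)*x^5)"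
    using Suc.IH unfolding z_def .
  have "Vs (Suc n) x * (x^3-1)^2 = Vs n x * (x^3-1)^2 + (- z + (9 * int n + 14)*(z*x) - (9 * int n + 16)*(z*x^2)) * (x^3-1)^2"
    unfolding Vs_Suc p1 z_def[symmetric] by (simp add: algebra_simps)
  also have "\<dots> = -7*x - x^2 + 14*x^3 - 2*x^4 + x^5 - 5*x^6
   + z * (1 - (9*(int n+1)+5)*x + (9*(int n+1)+7)*x^2 - x^3 + (9*(int n+1)-4)*x^4 - (9*(int n+1)-2)*x^5)
   + (- z + (9 * int n + 14)*(z*x) - (9 * int n + 16)*(z*x^2)) * (x^3-1)^2"
    unfolding IH ..
  also have "\<dots> = -7*x - x^2 + 14*x^3 - 2*x^4 + x^5 - 5*x^6
   + (z*x^3) * (1 - (9*(int (Suc n)+1)+5)*x + (9*(int (Suc n)+1)+7)*x^2 - x^3 + (9*(int (Suc n)+1)-4)*x^4 - (9*(int (Suc n)+1)-2)*x^5)"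
    by (simp add: algebra_simps power2_eq_square power3_eq_cube eval_nat_numeral)
  finally show ?case unfolding p1 .
qed

lemma Vs_cong1:
  assumes "[x^3 = 1] (mod q)"
  shows "[2 * Vs n x = 9*(int n+1)*int n + 10*int n + (-9*(int n+1)*int n - 14*(int n+1)) * x + (-2*int n) * x^2] (mod q)"
proof (induction n)
  case 0
  then show ?case by (simp add: Vs_0)
next
  case (Suc n)
  have a: "q dvd ((x^3)^n - 1)" "q dvd ((x^3)^Suc n - 1)"
    using cong_pow[OF assms, of n] cong_pow[OF assms, of "Suc n"]
    by (simp_all add: cong_iff_dvd_diff)
  have p1: "x^(3*n+2) = (x^3)^n * x^2" "x^(3*n+3) = (x^3)^Suc n" "x^(3*n+4) = (x^3)^Suc n * x"
    by (simp_all add: power_mult[symmetric] power_add[symmetric] algebra_simps flip: power_Suc)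
  define y where "y = (x^3)^n"
  define w where "w = (x^3)^Suc n"
  have "2 * Vs (Suc n) x - (9*(int (Suc n)+1)*int (Suc n) + 10*int (Suc n) + (-9*(int (Suc n)+1)*int (Suc n) - 14*(int (Suc n)+1)) * x + (-2*int (Suc n)) * x^2)
     = (2 * Vs n x - (9*(int n+1)*int n + 10*int n + (-9*(int n+1)*int n - 14*(int n+1)) * x + (-2*int n) * x^2))
       - 2 * x^2 * (y - 1) + 2*(9 * int n + 14) * (w - 1) - 2*(9 * int n + 16) * x * (w - 1)"
    unfolding Vs_Suc p1 y_def[symmetric] w_def[symmetric] by (simp add: algebra_simps)
  moreover have "q dvd (2 * Vs n x - (9*(int n+1)*int n + 10*int n + (-9*(int n+1)*int n - 14*(int n+1)) * x + (-2*int n) * x^2))"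
    using Suc.IH by (simp add: cong_iff_dvd_diff)
  ultimately show ?case using a unfolding y_def[symmetric] w_def[symmetric] cong_iff_dvd_diff
    by (metis dvd_add dvd_diff dvd_mult)
qed



lemma Leg3: "Legendre (int k) 3 = (if k mod 3 = 0 then 0 else if k mod 3 = 1 then 1 else -1)"
proof -
  have km: "int k mod 3 = int (k mod 3)" by (simp add: zmod_int)
  consider "k mod 3 = 0" | "k mod 3 = 1" | "k mod 3 = 2" by arith
  then show ?thesis
  proof cases
    case 1
    then show ?thesis using km by (simp add: Legendre_def cong_def)
  next
    case 2
    have "QuadRes 3 (int k)" unfolding QuadRes_def cong_def
      by (rule exI[of _ 1]) (use km 2 in simp)
    then show ?thesis using km 2 by (simp add: Legendre_def cong_def)
  next
    case 3
    have "\<not> QuadRes 3 (int k)"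
    proof
      assume "QuadRes 3 (int k)"
      then obtain y :: int where "y^2 mod 3 = int k mod 3" unfolding QuadRes_def cong_def by blast
      then have h: "((y mod 3)^2) mod 3 = 2" using km 3 by (simp add: power_mod)
      have "y mod 3 = 0 \<or> y mod 3 = 1 \<or> y mod 3 = 2" by arith
      then show False using h by auto
    qed
    then show ?thesis using km 3 by (simp add: Legendre_def cong_def)
  qed
qed

lemma term3:
  assumes "(q::int) dvd (3*t - 1)"
  shows "q dvd (3 * ((int k * Legendre (int k) 3 + of_bool (3 dvd (int k - 1)) - t) * x^(k-1)) - B k * x^(k-1))"
proof -
  have d: "3 dvd (int k - 1) \<longleftrightarrow> k mod 3 = 1"
    by presburger
  define A where "A = int k * Legendre (int k) 3 + of_bool (3 dvd (int k - 1))"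
  have "B k = 3 * A - 1"
    unfolding A_def Leg3 B_def d by auto
  then have "3 * ((int k * Legendre (int k) 3 + of_bool (3 dvd (int k - 1)) - t) * x^(k-1)) - B k * x^(k-1)
      = - ((3*t - 1) * x^(k-1))"
    unfolding A_def[symmetric] by (simp only:) (simp add: algebra_simps)
  then show ?thesis using assms by simp
qed

lemma fermat_int:
  assumes "prime p" "\<not> int p dvd x"
  shows "int p dvd (x^(p-1) - 1)"
proof -
  define a where "a = nat (x mod int p)"
  have p0: "int p > 0" using assms(1) prime_gt_0_nat by simp
  have ia: "int a = x mod int p" unfolding a_def using p0 by simp
  have "\<not> p dvd a"
  proof
    assume "p dvd a"
    then have "int p dvd x mod int p" using ia by (metis of_nat_dvd_iff)
    then show False using assms(2) by (simp add: dvd_mod_iff)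
  qed
  then have "[a^(p-1) = 1] (mod p)" using fermat_theorem assms(1) by blast
  then have "[int a^(p-1) = 1] (mod int p)" by (metis cong_int_iff of_nat_1 of_nat_power)
  moreover have "[x^(p-1) = int a^(p-1)] (mod int p)" unfolding ia
    by (rule cong_pow) (simp add: cong_def)
  ultimately have "[x^(p-1) = 1] (mod int p)" using cong_trans by blast
  then show ?thesis by (simp add: cong_iff_dvd_diff)
qed



lemma caseC:
  fixes P x :: int and n :: nat
  assumes P: "P = 3 * int n + 4" and pr: "prime P"
    and nx: "\<not> P dvd x" and nD: "\<not> P dvd (x^3 - 1)"
    and ferm: "P dvd (x^(3*n+3) - 1)"
  shows "P dvd (3 + 2 * x^(3*n+3) - x^(3*n+2) + Vs n x) * (x^2+x+1) - 3"
proof -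
  define z where "z = x^(3*n+2)"
  define D where "D = x^3 - 1"
  define W where "W = 3 + 2 * x^(3*n+3) - x^(3*n+2) + Vs n x"
  have xz: "x^(3*n+3) = x * z" unfolding z_def by (simp add: power_add eval_nat_numeral algebra_simps)
  have Wz: "W = 3 + 2 * (x*z) - z + Vs n x" unfolding W_def xz z_def ..
  have VD: "Vs n x * D^2 = -7*x - x^2 + 14*x^3 - 2*x^4 + x^5 - 5*x^6
   + z * (1 - (9*(int n+1)+5)*x + (9*(int n+1)+7)*x^2 - x^3 + (9*(int n+1)-4)*x^4 - (9*(int n+1)-2)*x^5)"
    unfolding D_def z_def by (rule Vs_id)
  have "x * W * D^2 = 3*x*D^2 + 2*x*(x*z)*D^2 - (x*z)*D^2 + x*(Vs n x * D^2)"
    unfolding Wz by (simp add: algebra_simps)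
  also have "\<dots> = 3*x*D^2 + 2*x*(x*z)*D^2 - (x*z)*D^2 + x*(-7*x - x^2 + 14*x^3 - 2*x^4 + x^5 - 5*x^6
   + z * (1 - (9*(int n+1)+5)*x + (9*(int n+1)+7)*x^2 - x^3 + (9*(int n+1)-4)*x^4 - (9*(int n+1)-2)*x^5))"
    unfolding VD ..
  also have "\<dots> = 3*x*(x-1)*D + (x*z - 1) * (2*x*D^2 - D^2 + (1 - (9*(int n+1)+5)*x + (9*(int n+1)+7)*x^2 - x^3 + (9*(int n+1)-4)*x^4 - (9*(int n+1)-2)*x^5))
        + P * (-3*x + 3*x^2 + 3*x^4 - 3*x^5)"
    unfolding P D_def by (simp add: algebra_simps power2_eq_square power3_eq_cube eval_nat_numeral)
  finally have eq: "x * W * D^2 - 3*x*(x-1)*D = (x*z - 1) * (2*x*D^2 - D^2 + (1 - (9*(int n+1)+5)*x + (9*(int n+1)+7)*x^2 - x^3 + (9*(int n+1)-4)*x^4 - (9*(int n+1)-2)*x^5))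
        + P * (-3*x + 3*x^2 + 3*x^4 - 3*x^5)" by simp
  have "P dvd (x*z - 1)" using ferm xz by simp
  then have d1: "P dvd (x * W * D^2 - 3*x*(x-1)*D)" unfolding eq by simp
  have Df: "D = (x-1) * (x^2+x+1)" unfolding D_def by (simp add: algebra_simps power2_eq_square power3_eq_cube)
  have "x * W * D^2 - 3*x*(x-1)*D = (x*(x-1)*D) * (W * (x^2+x+1) - 3)"
  proof -
    have "x * W * D^2 = x * W * D * ((x-1) * (x^2+x+1))" by (metis Df power2_eq_square mult.assoc)
    then show ?thesis by (simp add: algebra_simps)
  qed
  with d1 have d2: "P dvd (x*(x-1)*D) * (W * (x^2+x+1) - 3)" by simp
  have "\<not> P dvd (x-1)" using nD Df unfolding D_def by (metis dvd_mult2)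
  then have "\<not> P dvd (x*(x-1)*D)" using nx nD pr unfolding D_def by (simp add: prime_dvd_mult_iff)
  with d2 pr have "P dvd (W * (x^2+x+1) - 3)" by (simp add: prime_dvd_mult_iff)
  then show ?thesis unfolding W_def .
qed



theorem corollary2p1:
  fixes p :: nat and x t :: int
  assumes "prime p" and "[p = 1] (mod 3)"
    and "[3 * t = 1] (mod int p)"
  shows "[(x^2 + x + 1) ^ (p - 2)
          = 1 + 2 * t * x ^ (p - 1) - t * x ^ (p - 2)
            + (\<Sum>k = 2..p - 2. (int k * Legendre (int k) 3 + of_bool (3 dvd (int k - 1)) - t)
                                 * x ^ (k - 1))] (mod int p)"
proof -
  have pm: "p mod 3 = 1" using assms(2) by (simp add: cong_def)
  have "p \<noteq> 1" using assms(1) by auto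
  then have "\<exists>n. p = 3*n+4" using pm by presburger
  then obtain n where pn: "p = 3*n+4" by blast
  define P where "P = int p"
  have Pn: "P = 3 * int n + 4" unfolding P_def pn by simp
  have prP: "prime P" unfolding P_def using assms(1) by simp
  have e1: "p - 1 = 3*n+3" and e2: "p - 2 = 3*n+2" using pn by simp_all
  define f where "f = x^2 + x + 1"
  define W where "W = 3 + 2 * x^(3*n+3) - x^(3*n+2) + Vs n x"
  define S0 where "S0 = (\<Sum>k = 2..p - 2. (int k * Legendre (int k) 3 + of_bool (3 dvd (int k - 1)) - t) * x ^ (k - 1))"
  have t3: "P dvd (3*t - 1)" using assms(3) unfolding P_def by (simp add: cong_iff_dvd_diff)
  have nP3: "\<not> P dvd 3" using Pn by (auto dest: zdvd_imp_le)
  have nP2: "\<not> P dvd 2" using Pn by (auto dest: zdvd_imp_le)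
  have "3 * S0 - Vs n x = (\<Sum>k = 2..p - 2. 3 * ((int k * Legendre (int k) 3 + of_bool (3 dvd (int k - 1)) - t) * x ^ (k - 1)) - B k * x^(k-1))"
    unfolding S0_def Vs_def e2 by (simp add: sum_distrib_left sum_subtractf)
  also have "P dvd \<dots>" by (rule dvd_sum) (rule term3[OF t3])
  finally have dS: "P dvd 3 * S0 - Vs n x" .
  have "3 * (1 + 2 * t * x ^ (p - 1) - t * x ^ (p - 2) + S0) - W
      = (3*t - 1) * (2 * x^(3*n+3) - x^(3*n+2)) + (3 * S0 - Vs n x)"
    unfolding W_def e1 e2 by (simp add: algebra_simps)
  also have "P dvd \<dots>" using t3 dS by simp
  finally have dR: "P dvd 3 * (1 + 2 * t * x ^ (p - 1) - t * x ^ (p - 2) + S0) - W" .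
  have dL: "P dvd 3 * f^(3*n+2) - W"
  proof (cases "P dvd x")
    case True
    have "f - 1 = x * (x+1)" unfolding f_def by (simp add: algebra_simps power2_eq_square)
    then have "P dvd f - 1" using True by simp
    then have "[f = 1] (mod P)" by (simp add: cong_iff_dvd_diff)
    then have "[f^(3*n+2) = 1^(3*n+2)] (mod P)" by (rule cong_pow)
    then have a: "P dvd f^(3*n+2) - 1" by (simp add: cong_iff_dvd_diff)
    have xV: "x dvd Vs n x" unfolding Vs_def
    proof (rule dvd_sum)
      fix k assume "k \<in> {2..3*n+2}"
      then have "k - 1 > 0" by simp
      then show "x dvd B k * x^(k-1)" by (simp add: dvd_power)
    qed
    have "x dvd 2 * x^(3*n+3) - x^(3*n+2) + Vs n x" using xV by (simp add: dvd_power)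
    moreover have "W - 3 = 2 * x^(3*n+3) - x^(3*n+2) + Vs n x" unfolding W_def by simp
    ultimately have b: "P dvd W - 3" using True by (metis dvd_trans)
    have eq: "3 * f^(3*n+2) - W = 3 * (f^(3*n+2) - 1) - (W - 3)" by simp
    have d: "P dvd 3 * (f^(3*n+2) - 1) - (W - 3)" by (rule dvd_diff[OF dvd_mult[OF a] b])
    show ?thesis unfolding eq by (rule d)
  next
    case nx: False
    show ?thesis
    proof (cases "P dvd (x^3 - 1)")
      case True
      have "[x^3 = 1] (mod P)" using True by (simp add: cong_iff_dvd_diff)
      from Vs_cong1[OF this, of n] have c: "P dvd 2 * Vs n x - (9*(int n+1)*int n + 10*int n + (-9*(int n+1)*int n - 14*(int n+1)) * x + (-2*int n) * x^2)"
        by (simp add: cong_iff_dvd_diff)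
      have a: "P dvd ((x^3)^n - 1)" "P dvd ((x^3)^Suc n - 1)"
        using cong_pow[OF \<open>[x^3 = 1] (mod P)\<close>, of n] cong_pow[OF \<open>[x^3 = 1] (mod P)\<close>, of "Suc n"]
        by (simp_all add: cong_iff_dvd_diff)
      have p1: "x^(3*n+2) = (x^3)^n * x^2" "x^(3*n+3) = (x^3)^Suc n"
        by (simp_all add: power_mult[symmetric] power_add[symmetric] algebra_simps)
      define E where "E = 10 - 2*x^2 + (9*(int n+1)*int n + 10*int n + (-9*(int n+1)*int n - 14*(int n+1)) * x + (-2*int n) * x^2)"
      have "2 * W - E = 4 * ((x^3)^Suc n - 1) - 2 * x^2 * ((x^3)^n - 1) + (2 * Vs n x - (9*(int n+1)*int n + 10*int n + (-9*(int n+1)*int n - 14*(int n+1)) * x + (-2*int n) * x^2))"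
        unfolding W_def E_def p1 by (simp add: algebra_simps)
      also have "P dvd \<dots>" by (rule dvd_add[OF dvd_diff[OF dvd_mult[OF a(2)] dvd_mult[OF a(1)]] c])
      finally have dWE: "P dvd 2 * W - E" .
      have "x^3 - 1 = (x - 1) * f" unfolding f_def by (simp add: algebra_simps power2_eq_square power3_eq_cube)
      with True prP have "P dvd (x - 1) \<or> P dvd f" by (simp add: prime_dvd_mult_iff)
      then show ?thesis
      proof
        assume x1: "P dvd (x - 1)"
        have "E - 2 = (x - 1) * ((-9*(int n+1)*int n - 14*(int n+1)) + (-2*int n - 2)*(x+1)) - 2 * P"
          unfolding E_def Pn by (simp add: algebra_simps power2_eq_square)
        then have "P dvd E - 2" using x1 by simp
        have eqw: "2 * W - 2 = (2 * W - E) + (E - 2)" by simp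
        have w2: "P dvd 2 * W - 2" unfolding eqw by (rule dvd_add[OF dWE \<open>P dvd E - 2\<close>])
        have "f - 3 = (x-1) * (x+2)" unfolding f_def by (simp add: algebra_simps power2_eq_square)
        then have "[f = 3] (mod P)" using x1 by (simp add: cong_iff_dvd_diff)
        then have "[f^(3*n+2) = 3^(3*n+2)] (mod P)" by (rule cong_pow)
        then have f3: "P dvd f^(3*n+2) - 3^(3*n+2)" by (simp add: cong_iff_dvd_diff)
        have h3: "\<not> int p dvd 3" using nP3 unfolding P_def .
        have "P dvd 3^(3*n+3) - 1" using fermat_int[OF assms(1) h3] unfolding e1 P_def .
        moreover have "(3::int)^(3*n+3) = 3 * 3^(3*n+2)" proof -
          have "3*n+3 = Suc (3*n+2)" by simp
          then show ?thesis by (simp only: power_Suc)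
        qed
        ultimately have g: "P dvd 3 * 3^(3*n+2) - 1" by (simp only:)
        define c :: int where "c = 3^(3*n+2)"
        have f3': "P dvd f^(3*n+2) - c" using f3 unfolding c_def .
        have g': "P dvd 3 * c - 1" using g unfolding c_def .
        have eq6: "6 * f^(3*n+2) - 2 = 6 * (f^(3*n+2) - c) + 2 * (3 * c - 1)" by simp
        have d6: "P dvd 6 * f^(3*n+2) - 2" unfolding eq6 by (rule dvd_add[OF dvd_mult[OF f3'] dvd_mult[OF g']])
        have eq2: "2 * (3 * f^(3*n+2) - W) = (6 * f^(3*n+2) - 2) - (2 * W - 2)" by simp
        have h: "P dvd 2 * (3 * f^(3*n+2) - W)" unfolding eq2 by (rule dvd_diff[OF d6 w2])
        show ?thesis using prime_dvd_multD[OF prP h] nP2 by blast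
      next
        assume pf: "P dvd f"
        have "E = (-2*int n - 2) * f + 3 * (int n + 1) * P * (1 - x)"
          unfolding E_def Pn f_def by (simp add: algebra_simps power2_eq_square)
        then have "P dvd E" using pf by simp
        have eqw: "2 * W = (2 * W - E) + E" by simp
        have w2: "P dvd 2 * W" by (subst eqw) (rule dvd_add[OF dWE \<open>P dvd E\<close>])
        have "f dvd f^(3*n+2)" by (rule dvd_power) simp
        then have pf2: "P dvd f^(3*n+2)" using pf by (rule dvd_trans[rotated])
        have eq2: "2 * (3 * f^(3*n+2) - W) = 6 * f^(3*n+2) - 2 * W" by simp
        have h: "P dvd 2 * (3 * f^(3*n+2) - W)" unfolding eq2 by (rule dvd_diff[OF dvd_mult[OF pf2] w2])
        show ?thesis using prime_dvd_multD[OF prP h] nP2 by blast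
      qed
    next
      case nD: False
      have ferm: "P dvd (x^(3*n+3) - 1)" using fermat_int[OF assms(1) nx[unfolded P_def]] unfolding P_def[symmetric] e1 .
      have Wf: "P dvd W * f - 3" using caseC[OF Pn prP nx nD ferm] unfolding W_def f_def .
      have "x^3 - 1 = (x - 1) * f" unfolding f_def by (simp add: algebra_simps power2_eq_square power3_eq_cube)
      then have "\<not> P dvd f" using nD by (metis dvd_mult dvd_trans)
      then have nf: "\<not> int p dvd f" unfolding P_def .
      have ff: "P dvd f^(3*n+3) - 1" using fermat_int[OF assms(1) nf] unfolding P_def[symmetric] e1 .
      have f33: "f^(3*n+3) = f^(3*n+2) * f"
      proof -
        have "3*n+3 = Suc (3*n+2)" by simp
        then show ?thesis by (simp only: power_Suc2)
      qed
      have "W - 3 * f^(3*n+2) = - (W * (f^(3*n+3) - 1)) + f^(3*n+2) * (W * f - 3)"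
        unfolding f33 by (simp add: algebra_simps)
      also have "P dvd \<dots>" using ff Wf by simp
      finally have "P dvd W - 3 * f^(3*n+2)" .
      then show ?thesis by (metis dvd_minus_iff minus_diff_eq)
    qed
  qed
  have "3 * (f^(p-2) - (1 + 2 * t * x ^ (p - 1) - t * x ^ (p - 2) + S0))
      = (3 * f^(3*n+2) - W) - (3 * (1 + 2 * t * x ^ (p - 1) - t * x ^ (p - 2) + S0) - W)"
    unfolding e2 by (simp add: algebra_simps)
  also have "P dvd \<dots>" by (rule dvd_diff[OF dL dR])
  finally have h: "P dvd 3 * (f^(p-2) - (1 + 2 * t * x ^ (p - 1) - t * x ^ (p - 2) + S0))" .
  have "P dvd f^(p-2) - (1 + 2 * t * x ^ (p - 1) - t * x ^ (p - 2) + S0)"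
    using prime_dvd_multD[OF prP h] nP3 by blast
  then show ?thesis unfolding P_def f_def S0_def by (simp add: cong_iff_dvd_diff)
qed


end
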